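(* Consider $\dot y=A(t)y+B(t)(u+\Delta(y,t))$, $y\in\mathbb{R}^{\bar n}$, $u\in\mathbb{R}^{\bar m}$, with continuous, bounded, $T$-periodic $A(t),B(t)$ (minimal period $T>0$) and unknown bounded $\Delta$. Let $K:\mathbb{R}_+\to\mathbb{R}^{\bar m\times\bar n}$ be continuous and $T$-periodic such that the origin of $\dot\chi=A^{cl}(t)\chi$, $A^{cl}=A+BK$, is exponentially stable, and let $\Psi_{A^{cl}}(t,t_0)$ be its state-transition matrix and $\mathcal M_{A^{cl}}=\Psi_{A^{cl}}(T,0)$ its monodromy matrix. Let $X_0\in\mathbb{R}^{\bar n\times(\bar n-\bar m)}$ be of full rank and let the $\mathcal{C}^1$ matrix function $S:\mathbb{R}_+\to\mathbb{R}^{\bar m\times\bar n}$ satisfy $S(t)\Psi_{A^{cl}}(t,0)X_0p=0$ for all $p\in\mathbb{R}^{\bar n-\bar m}$ and all $t\ge0$. If $\operatorname{rank}[S(t)B(t)]=\bar m$ for all $t\ge0$, then forward invariance of $S(t)y(t)\equiv0$ for $t\ge t_0$ corresponds to the system experiencing the equivalent control $u_{eq}(t)=K(t)y(t)-\Delta(y(t),t)$ for all $t\ge t_0$. Moreover, if $S$ is $T$-periodic, then the columns of $X_0$ form a basis of an invariant subspace of $\mathcal M_{A^{cl}}$ of codimension $\bar m$.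
   Context: Equivalent control: the control obtained from requiring $\frac{d}{dt}(S(t)y(t))\equiv0$ along motions satisfying $S(t)y(t)=0$. *)

theory Defs
  imports "HOL-Analysis.Analysis"
begin

definition state_transition ::
  "(real \<Rightarrow> real^'n^'n) \<Rightarrow> (real \<Rightarrow> real \<Rightarrow> real^'n^'n) \<Rightarrow> bool" where
  "state_transition Acl Psi \<longleftrightarrow>
     (\<forall>t0\<ge>0. Psi t0 t0 = mat 1 \<and>
        (\<forall>t\<ge>0. ((\<lambda>s. Psi s t0) has_vector_derivative (Acl t ** Psi t t0)) (at t within {0..})))"

definition exp_stable_origin :: "(real \<Rightarrow> real^'n^'n) \<Rightarrow> bool" where
  "exp_stable_origin Acl \<longleftrightarrow>
     (\<exists>k lam. k > 0 \<and> lam > 0 \<and>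
       (\<forall>t0 \<ge> 0. \<forall>chi :: real \<Rightarrow> real^'n.
          (\<forall>t\<ge>t0. (chi has_vector_derivative (Acl t *v chi t)) (at t within {t0..})) \<longrightarrow>
          (\<forall>t\<ge>t0. norm (chi t) \<le> k * exp (- lam * (t - t0)) * norm (chi t0))))"

definition periodic_on_nonneg :: "real \<Rightarrow> (real \<Rightarrow> 'a) \<Rightarrow> bool" where
  "periodic_on_nonneg T f \<longleftrightarrow> (\<forall>t\<ge>0. f (t + T) = f t)"

end

theory Submission
  imports Defs
begin


lemma bb_mv: "bounded_bilinear (\<lambda>(A::real^'n^'m) (x::real^'n). A *v x)"
proof (rule bounded_bilinear.intro)
  show "\<exists>K. \<forall>A x. norm ((A::real^'n^'m) *v (x::real^'n)) \<le> norm A * norm x * K"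
  proof (intro exI allI)
    fix A :: "real^'n^'m" and x :: "real^'n"
    have "norm (A *v x) \<le> (\<Sum>i\<in>UNIV. \<bar>(A *v x)$i\<bar>)" by (rule norm_le_l1_cart)
    also have "\<dots> \<le> (\<Sum>i\<in>(UNIV::'m set). norm A * norm x)"
    proof (rule sum_mono)
      fix i
      have "\<bar>(A *v x)$i\<bar> = \<bar>inner (A$i) x\<bar>" by (simp add: matrix_vector_mul_component)
      also have "\<dots> \<le> norm (A$i) * norm x" by (rule Cauchy_Schwarz_ineq2)
      also have "\<dots> \<le> norm A * norm x"
        by (rule mult_right_mono[OF Finite_Cartesian_Product.norm_nth_le norm_ge_zero])
      finally show "\<bar>(A *v x)$i\<bar> \<le> norm A * norm x" .
    qed
    finally show "norm (A *v x) \<le> norm A * norm x * real CARD('m)" by (simp add: algebra_simps)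
  qed
qed (auto simp: matrix_vector_mult_add_rdistrib matrix_vector_right_distrib matrix_vector_mult_scaleR scaleR_matrix_vector_assoc[symmetric])

lemma not_bot_Ici: "t0 \<le> (t::real) \<Longrightarrow> at t within {t0..} \<noteq> bot"
proof
  assume "t0 \<le> t" "at t within {t0..} = bot"
  moreover have "at t within {t..t+1} \<le> at t within {t0..}" using \<open>t0 \<le> t\<close> by (intro at_le) auto
  moreover have "at t within {t..t+1} = at_right t" by (rule at_within_Icc_at_right) simp
  ultimately show False using trivial_limit_at_right_real by (metis bot_unique)
qed

lemma zero_deriv:
  fixes f :: "real \<Rightarrow> 'a::real_normed_vector"
  assumes "(f has_vector_derivative D) (at t within {a..})" "a \<le> t" "\<forall>s\<ge>a. f s = 0"
  shows "D = 0"
proof -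
  have "((\<lambda>s. 0) has_vector_derivative D) (at t within {a..})"
    by (rule has_vector_derivative_transform[OF _ _ assms(1)]) (use assms in auto)
  moreover have "((\<lambda>s. 0) has_vector_derivative 0) (at t within {a..})" by simp
  ultimately show ?thesis using vector_derivative_unique_within not_bot_Ici assms(2) by blast
qed

lemma uniq:
  fixes Acl :: "real \<Rightarrow> real^'n^'n"
  assumes st: "exp_stable_origin Acl" and t0: "t0 \<ge> 0"
   and d1: "\<forall>t\<ge>t0. (ca has_vector_derivative (Acl t *v ca t)) (at t within {t0..})"
   and d2: "\<forall>t\<ge>t0. (cb has_vector_derivative (Acl t *v cb t)) (at t within {t0..})"
   and init: "ca t0 = cb t0" and t: "t \<ge> t0"
  shows "ca t = cb t"
proof -
  obtain k lam where kl: "\<forall>t0\<ge>0. \<forall>chi :: real \<Rightarrow> real^'n.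
          (\<forall>t\<ge>t0. (chi has_vector_derivative (Acl t *v chi t)) (at t within {t0..})) \<longrightarrow>
          (\<forall>t\<ge>t0. norm (chi t) \<le> k * exp (- lam * (t - t0)) * norm (chi t0))"
    using st unfolding exp_stable_origin_def by blast
  have "\<forall>s\<ge>t0. ((\<lambda>s. ca s - cb s) has_vector_derivative (Acl s *v (ca s - cb s))) (at s within {t0..})"
  proof (intro allI impI)
    fix s assume "s \<ge> t0"
    have "((\<lambda>s. ca s - cb s) has_vector_derivative (Acl s *v ca s - Acl s *v cb s)) (at s within {t0..})"
      by (rule has_vector_derivative_diff) (use d1 d2 \<open>s \<ge> t0\<close> in auto)
    then show "((\<lambda>s. ca s - cb s) has_vector_derivative (Acl s *v (ca s - cb s))) (at s within {t0..})"
      by (simp add: matrix_vector_mult_diff_distrib)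
  qed
  then have "norm (ca t - cb t) \<le> k * exp (- lam * (t - t0)) * norm (ca t0 - cb t0)"
    using kl t0 t by blast
  then show ?thesis using init by simp
qed

lemma psi_sol:
  fixes Acl :: "real \<Rightarrow> real^'n^'n"
  assumes "state_transition Acl Psi" "t0 \<ge> 0" "s \<ge> 0"
  shows "((\<lambda>s. Psi s t0 *v w) has_vector_derivative (Acl s *v (Psi s t0 *v w))) (at s within {0..})"
proof -
  have "((\<lambda>s. Psi s t0) has_vector_derivative (Acl s ** Psi s t0)) (at s within {0..})"
    using assms unfolding state_transition_def by blast
  from bounded_bilinear.has_vector_derivative[OF bb_mv this has_vector_derivative_const[of w]]
  show ?thesis by (simp add: matrix_vector_mul_assoc)
qed

lemma psi_inv:
  fixes Acl :: "real \<Rightarrow> real^'n^'n"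
  assumes ST: "state_transition Acl Psi" and st: "exp_stable_origin Acl" and t: "t \<ge> 0"
  shows "invertible (Psi t 0)"
proof -
  have "Psi t 0 *v (Psi 0 t *v w) = w" for w
  proof -
    have I: "Psi a a = mat 1" if "a \<ge> 0" for a using ST that unfolding state_transition_def by blast
    have "Psi t 0 *v (Psi 0 t *v w) = Psi t t *v w"
    proof (rule uniq[where ca="\<lambda>s. Psi s 0 *v (Psi 0 t *v w)" and cb="\<lambda>s. Psi s t *v w", OF st order_refl])
      show "\<forall>s\<ge>0. ((\<lambda>s. Psi s 0 *v (Psi 0 t *v w)) has_vector_derivative
          (Acl s *v (Psi s 0 *v (Psi 0 t *v w)))) (at s within {0..})"
        using psi_sol[OF ST] by auto
      show "\<forall>s\<ge>0. ((\<lambda>s. Psi s t *v w) has_vector_derivative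
          (Acl s *v (Psi s t *v w))) (at s within {0..})"
        using psi_sol[OF ST] t by auto
    qed (use I t in auto)
    then show ?thesis using I t by simp
  qed
  then have "Psi t 0 ** Psi 0 t = mat 1"
    by (simp add: matrix_eq matrix_vector_mul_assoc[symmetric])
  then show ?thesis using invertible_right_inverse by blast
qed

lemma ker_lemma:
  fixes S :: "real^'n^'m" and P :: "real^'n^'n" and X0 :: "real^'k^'n" and B :: "real^'m^'n"
  assumes P: "invertible P" and X0: "rank X0 = CARD('k)" and dims: "CARD('k)+CARD('m) = CARD('n)"
    and SK: "\<forall>p. S *v (P *v (X0 *v p)) = 0" and SB: "rank (S ** B) = CARD('m)" and x: "S *v x = 0"
  shows "\<exists>p. x = P *v (X0 *v p)"
proof -
  let ?R = "range (\<lambda>p. (P ** X0) *v p)"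
  let ?N = "{y. S *v y = 0}"
  have rS: "rank S = CARD('m)" using rank_mul_le_left[of S B] rank_bound[of S] SB by simp
  obtain Q where Q: "Q ** P = mat 1" using P unfolding invertible_def by blast
  have "rank X0 \<le> rank (P ** X0)"
    using rank_mul_le_right[of Q "P ** X0"] Q by (simp add: matrix_mul_assoc)
  moreover have "rank (P ** X0) \<le> rank X0" by (rule rank_mul_le_right)
  ultimately have dimR: "dim ?R = CARD('k)" using X0 rank_dim_range[of "P ** X0"] by simp
  have sub: "?R \<subseteq> ?N" using SK by (auto simp: matrix_vector_mul_assoc[symmetric])
  have NO: "?N \<subseteq> {y \<in> UNIV. \<forall>z\<in>span (rows S). orthogonal z y}"
  proof
    fix y assume "y \<in> ?N"
    then have y: "S *v y = 0" by simp
    show "y \<in> {y \<in> UNIV. \<forall>z\<in>span (rows S). orthogonal z y}"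
    proof (simp only: mem_Collect_eq UNIV_I simp_thms, intro ballI)
    fix z assume z: "z \<in> span (rows S)"
    have "\<And>r. r \<in> rows S \<Longrightarrow> orthogonal y r"
    proof -
      fix r assume "r \<in> rows S"
      then obtain i where "r = row i S" unfolding rows_def by blast
      moreover have "(S *v y) $ i = 0" using y by simp
      ultimately show "orthogonal y r"
        by (simp add: matrix_vector_mul_component row_def orthogonal_def inner_commute)
    qed
    then have "orthogonal y z" using orthogonal_to_span[OF z] by blast
    then show "orthogonal z y" by (simp add: orthogonal_commute)
  qed
  qed
  have "dim {y \<in> UNIV. \<forall>z\<in>span (rows S). orthogonal z y} + dim (span (rows S)) = dim (UNIV :: (real^'n) set)"
    by (rule dim_subspace_orthogonal_to_vectors) auto
  moreover have "dim (span (rows S)) = CARD('m)" using rS by (simp add: row_rank_def dim_span)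
  ultimately have "dim {y \<in> UNIV. \<forall>z\<in>span (rows S). orthogonal z y} = CARD('k)"
    using dims by simp
  then have "dim ?N \<le> dim ?R" using dim_subset[OF NO] dimR by simp
  then have spRN: "span ?R = span ?N" using dim_eq_span[OF sub] by simp
  have "subspace ?R" using linear_subspace_image[OF matrix_vector_mul_linear subspace_UNIV, of "P ** X0"] by simp
  then have sR: "span ?R = ?R" by (simp only: span_eq_iff)
  have "?N \<subseteq> span ?N" by (rule span_superset)
  then have "?N \<subseteq> ?R" using sR spRN by simp
  then obtain p where "x = (P ** X0) *v p" using x by blast
  then show ?thesis by (auto simp: matrix_vector_mul_assoc[symmetric])
qed

theorem lemma3:
  fixes A :: "real \<Rightarrow> real^'n^'n" and B :: "real \<Rightarrow> real^'m^'n"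
    and K :: "real \<Rightarrow> real^'n^'m" and \<Delta> :: "real^'n \<Rightarrow> real \<Rightarrow> real^'m"
    and Psi :: "real \<Rightarrow> real \<Rightarrow> real^'n^'n"
    and X0 :: "real^'k^'n" and S :: "real \<Rightarrow> real^'n^'m"
    and T :: real
  assumes dims: "CARD('k) + CARD('m) = CARD('n)"
    and T_pos: "T > 0"
    and A_cont: "continuous_on {0..} A" and B_cont: "continuous_on {0..} B"
    and A_bdd: "bounded (A ` {0..})" and B_bdd: "bounded (B ` {0..})"
    and A_per: "periodic_on_nonneg T A" and B_per: "periodic_on_nonneg T B"
    and T_min: "\<forall>T'. 0 < T' \<and> T' < T \<longrightarrow> \<not> (periodic_on_nonneg T' A \<and> periodic_on_nonneg T' B)"
    and Delta_bdd: "bounded (range (\<lambda>(y, t). \<Delta> y t))"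
    and K_cont: "continuous_on {0..} K" and K_per: "periodic_on_nonneg T K"
    and stable: "exp_stable_origin (\<lambda>t. A t + B t ** K t)"
    and Psi: "state_transition (\<lambda>t. A t + B t ** K t) Psi"
    and X0_rank: "rank X0 = CARD('k)"
    and S_C1: "\<exists>S'. (\<forall>t\<ge>0. (S has_vector_derivative S' t) (at t within {0..}))
                     \<and> continuous_on {0..} S'"
    and S_ker: "\<forall>t\<ge>0. \<forall>p. S t *v (Psi t 0 *v (X0 *v p)) = 0"
    and SB_rank: "\<forall>t\<ge>0. rank (S t ** B t) = CARD('m)"
  shows
    "(\<forall>(y :: real \<Rightarrow> real^'n) (u :: real \<Rightarrow> real^'m) t0.
        t0 \<ge> 0 \<longrightarrow>
        (\<forall>t\<ge>t0. (y has_vector_derivative (A t *v y t + B t *v (u t + \<Delta> (y t) t)))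
                    (at t within {t0..})) \<longrightarrow>
        S t0 *v y t0 = 0 \<longrightarrow>
        ((\<forall>t\<ge>t0. S t *v y t = 0) \<longleftrightarrow> (\<forall>t\<ge>t0. u t = K t *v y t - \<Delta> (y t) t)))
     \<and> (periodic_on_nonneg T S \<longrightarrow>
        (let M = Psi T 0; V = span {column i X0 | i. True} in
           independent {column i X0 | i. True} \<and> card {column i X0 | i. True} = CARD('k)
           \<and> (\<forall>v\<in>V. M *v v \<in> V) \<and> dim V = CARD('n) - CARD('m)))"
proof -
  define Acl where "Acl = (\<lambda>t. A t + B t ** K t)"
  have st: "exp_stable_origin Acl" using stable by (simp add: Acl_def)
  have ST: "state_transition Acl Psi" using Psi by (simp add: Acl_def)
  have I: "Psi a a = mat 1" if "a \<ge> 0" for a using ST that unfolding state_transition_def by blast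
  have kerL: "\<exists>p. x = Psi t 0 *v (X0 *v p)" if "t \<ge> 0" "S t *v x = 0" for t x
    by (rule ker_lemma[OF psi_inv[OF ST st \<open>t \<ge> 0\<close>] X0_rank dims _ _ \<open>S t *v x = 0\<close>, of "B t"])
       (use S_ker SB_rank \<open>t \<ge> 0\<close> in auto)
  obtain S' where S': "\<forall>t\<ge>0. (S has_vector_derivative S' t) (at t within {0..})"
    using S_C1 by blast
  have key: "S' t *v x + S t *v (Acl t *v x) = 0" if kt: "t \<ge> 0" and kx: "S t *v x = 0" for t x
  proof -
    obtain p where p: "x = Psi t 0 *v (X0 *v p)" using kerL[OF kt kx] by blast
    have dz: "((\<lambda>s. Psi s 0 *v (X0 *v p)) has_vector_derivative (Acl t *v (Psi t 0 *v (X0 *v p)))) (at t within {0..})"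
      using psi_sol[OF ST order_refl \<open>t \<ge> 0\<close>] .
    have "((\<lambda>s. S s *v (Psi s 0 *v (X0 *v p))) has_vector_derivative
        (S t *v (Acl t *v (Psi t 0 *v (X0 *v p))) + S' t *v (Psi t 0 *v (X0 *v p)))) (at t within {0..})"
      using bounded_bilinear.has_vector_derivative[OF bb_mv S'[rule_format, OF \<open>t \<ge> 0\<close>] dz] by simp
    then have "S t *v (Acl t *v (Psi t 0 *v (X0 *v p))) + S' t *v (Psi t 0 *v (X0 *v p)) = 0"
      by (rule zero_deriv) (use S_ker \<open>t \<ge> 0\<close> in auto)
    then show ?thesis using p by (simp add: add.commute)
  qed
  have part1: "((\<forall>t\<ge>t0. S t *v y t = 0) \<longleftrightarrow> (\<forall>t\<ge>t0. u t = K t *v y t - \<Delta> (y t) t))"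
    if t0: "t0 \<ge> 0"
      and dy: "\<forall>t\<ge>t0. (y has_vector_derivative (A t *v y t + B t *v (u t + \<Delta> (y t) t))) (at t within {t0..})"
      and y0: "S t0 *v y t0 = 0"
    for y :: "real \<Rightarrow> real^'n" and u :: "real \<Rightarrow> real^'m" and t0
  proof
    assume Sy: "\<forall>t\<ge>t0. S t *v y t = 0"
    show "\<forall>t\<ge>t0. u t = K t *v y t - \<Delta> (y t) t"
    proof (intro allI impI)
      fix t assume t: "t \<ge> t0"
      then have t0': "t \<ge> 0" using t0 by simp
      define w where "w = u t + \<Delta> (y t) t"
      have dS: "(S has_vector_derivative S' t) (at t within {t0..})"
        by (rule has_vector_derivative_within_subset[OF S'[rule_format, OF t0']]) (use t0 in auto)
      have "((\<lambda>s. S s *v y s) has_vector_derivative (S t *v (A t *v y t + B t *v w) + S' t *v y t)) (at t within {t0..})"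
        using bounded_bilinear.has_vector_derivative[OF bb_mv dS dy[rule_format, OF t]] by (simp add: w_def)
      then have e1: "S t *v (A t *v y t + B t *v w) + S' t *v y t = 0"
        by (rule zero_deriv) (use Sy t in auto)
      have e2: "S' t *v y t + S t *v (Acl t *v y t) = 0" using key[OF t0'] Sy t by blast
      have e3: "S t *v (B t *v w) = S t *v (B t *v (K t *v y t))"
      proof -
        have h1: "S' t *v y t + (S t *v (B t *v w) + S t *v (A t *v y t)) = 0"
          using e1 by (simp add: matrix_vector_right_distrib algebra_simps)
        have h2: "S' t *v y t + (S t *v (B t *v (K t *v y t)) + S t *v (A t *v y t)) = 0"
          using e2 by (simp add: Acl_def matrix_vector_mult_add_rdistrib matrix_vector_right_distrib
            matrix_vector_mul_assoc[symmetric] algebra_simps)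
        from h1 h2 show ?thesis by (metis add_left_cancel add_right_cancel)
      qed
      have "(S t ** B t) *v (w - K t *v y t) = 0"
        using e3 by (simp add: Acl_def matrix_vector_mult_add_rdistrib matrix_vector_right_distrib
            matrix_vector_mult_diff_distrib matrix_vector_mul_assoc[symmetric] algebra_simps)
      moreover have "inj ((*v) (S t ** B t))" using SB_rank t0' full_rank_injective by blast
      ultimately have "w - K t *v y t = 0"
        by (metis injD matrix_vector_mult_0_right)
      then show "u t = K t *v y t - \<Delta> (y t) t" by (simp add: w_def algebra_simps)
    qed
  next
    assume ueq: "\<forall>t\<ge>t0. u t = K t *v y t - \<Delta> (y t) t"
    obtain p where p: "y t0 = Psi t0 0 *v (X0 *v p)" using kerL t0 y0 by blast
    show "\<forall>t\<ge>t0. S t *v y t = 0"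
    proof (intro allI impI)
      fix t assume t: "t \<ge> t0"
      have "y t = Psi t 0 *v (X0 *v p)"
      proof (rule uniq[where ca=y and cb="\<lambda>s. Psi s 0 *v (X0 *v p)", OF st t0 _ _ _ t])
        show "\<forall>s\<ge>t0. (y has_vector_derivative (Acl s *v y s)) (at s within {t0..})"
        proof (intro allI impI)
          fix s assume s: "s \<ge> t0"
          have "Acl s *v y s = A s *v y s + B s *v (u s + \<Delta> (y s) s)"
            using ueq s by (simp add: Acl_def matrix_vector_mult_add_rdistrib matrix_vector_mul_assoc[symmetric])
          then show "(y has_vector_derivative (Acl s *v y s)) (at s within {t0..})"
            using dy s by simp
        qed
        show "\<forall>s\<ge>t0. ((\<lambda>s. Psi s 0 *v (X0 *v p)) has_vector_derivative (Acl s *v (Psi s 0 *v (X0 *v p)))) (at s within {t0..})"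
        proof (intro allI impI)
          fix s assume s: "s \<ge> t0"
          show "((\<lambda>s. Psi s 0 *v (X0 *v p)) has_vector_derivative (Acl s *v (Psi s 0 *v (X0 *v p)))) (at s within {t0..})"
            by (rule has_vector_derivative_within_subset[OF psi_sol[OF ST order_refl]]) (use s t0 in auto)
        qed
      qed (use p in simp)
      then show "S t *v y t = 0" using S_ker t t0 by simp
    qed
  qed
  have part2: "let M = Psi T 0; V = span {column i X0 | i. True} in
           independent {column i X0 | i. True} \<and> card {column i X0 | i. True} = CARD('k)
           \<and> (\<forall>v\<in>V. M *v v \<in> V) \<and> dim V = CARD('n) - CARD('m)"
    if per: "periodic_on_nonneg T S"
  proof -
    let ?C = "{column i X0 | i. True}"
    have C: "?C = columns X0" by (simp add: columns_def)
    have dimC: "dim ?C = CARD('k)" using X0_rank C column_rank_def[of X0] by simp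
    have Crange: "?C = range (\<lambda>i. column i X0)" by auto
    have finC: "finite ?C" using Crange by simp
    have cardle: "card ?C \<le> CARD('k)" using Crange card_image_le[of UNIV "\<lambda>i. column i X0"] by simp
    have "dim ?C \<le> card ?C" using dim_le_card[OF span_superset finC] .
    then have cardC: "card ?C = CARD('k)" using cardle dimC by simp
    have indC: "independent ?C" using card_eq_dim[of ?C ?C] cardC dimC finC span_superset by simp
    have spanC: "span ?C = range (\<lambda>p. X0 *v p)"
    proof
      show "span ?C \<subseteq> range (\<lambda>p. X0 *v p)"
      proof (rule span_minimal)
        show "?C \<subseteq> range (\<lambda>p. X0 *v p)"
          by (auto simp: matrix_vector_mult_basis[symmetric])
        show "subspace (range (\<lambda>p. X0 *v p))"
          using linear_subspace_image[OF matrix_vector_mul_linear subspace_UNIV, of X0] by simp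
      qed
      show "range (\<lambda>p. X0 *v p) \<subseteq> span ?C"
        using matrix_vector_mult_in_columnspace[of X0] C by auto
    qed
    have inv: "Psi T 0 *v v \<in> span ?C" if "v \<in> span ?C" for v
    proof -
      obtain p where p: "v = X0 *v p" using \<open>v \<in> span ?C\<close> spanC by auto
      have "S T = S 0" using per unfolding periodic_on_nonneg_def by (metis add_0 order_refl)
      then have "S 0 *v (Psi T 0 *v v) = 0" using S_ker T_pos p by (metis less_imp_le)
      then obtain q where "Psi T 0 *v v = Psi 0 0 *v (X0 *v q)" using kerL by blast
      then show ?thesis using I spanC by simp
    qed
    show ?thesis using indC cardC inv dimC dims by (simp add: Let_def dim_span)
  qed
  show ?thesis using part1 part2 by blast
qed

end
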